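(* Let $V$ be a locally convex space, $\Omega\subset V$ open, and $g$ a Riemannian metric on $\Omega$ with Levi–Civita connection $D=d+A$ of class $C^1$ and curvature $R$. Let $I\subset\mathbb R$ be an interval, $x\in C^2(I,\Omega)$ a geodesic, $\xi\in C^1(I,V)$, and $\tau\in I$. Suppose there is a collection $H$ of Jacobi fields $\eta$ along $x|J_\eta$, where $J_\eta\subset I$ is a neighborhood of $\tau$, such that each $\eta\in H$ vanishes at $\tau$ and $\{\dot\eta(\tau)\colon\eta\in H\}$ is dense in $V$. Then for every $\eta\in H$ the function $t\mapsto g\big(x(t),\xi(t),\eta(t)\big)$ is twice differentiable at $\tau$, and $D_{\dot x}\xi(\tau)=0$ if and only if $$ \frac{d^2}{dt^2}g\big(x(t),\xi(t),\eta(t)\big)\Big|_{t=\tau}=0\qquad\text{for all }\eta\in H. $$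
   Context: All locally convex spaces are real, Hausdorff and sequentially complete. $f$ is $C^1$ if directional derivatives $df(v,\xi)=\lim_{t\to0}(f(v+t\xi)-f(v))/t$ exist and $df$ is continuous; $C^k$ inductively. A Riemannian metric on $\Omega$ is a map $g\colon\Omega\times V\times V\to\mathbb R$ with each $g(v,\cdot,\cdot)$ positive definite symmetric bilinear. For a $C^1$ metric $g$, a Levi–Civita connection is $D_\xi\varphi(v)=d\varphi(v,\xi)+A(v,\xi)\varphi(v)$ with $A(v,\xi)$ a continuous linear map $V\to V$, linear in $\xi$, $(v,\xi,w)\mapsto A(v,\xi)w$ continuous, $A(v,\xi)\eta=A(v,\eta)\xi$, and $\xi g(\cdot,\varphi,\psi)=g(\cdot,D_\xi\varphi,\psi)+g(\cdot,\varphi,D_\xi\psi)$ for all $\xi\in V$, $\varphi,\psi\in C^1(\Omega,V)$; it is of class $C^k$ if $(v,\xi,w)\mapsto A(v,\xi)w$ is $C^k$. Its curvature is $R(v,\xi,\eta)=(\xi A(\cdot,\eta))(v)-(\eta A(\cdot,\xi))(v)+A(v,\xi)A(v,\eta)-A(v,\eta)A(v,\xi)$. For $x\in C^1(I,\Omega)$ and $\varphi\in C^1(I,V)$, $D_{\dot x}\varphi(t)=\dot\varphi(t)+A\big(x(t),\dot x(t)\big)\varphi(t)$ (dot is $d/dt$). A geodesic is a $C^2$ curve with $D_{\dot x}\dot x=0$. A Jacobi field along a geodesic $x$ (on an interval $J$) is $\varphi\in C^2(J,V)$ with $D_{\dot x}^2\varphi=R(x,\dot x,\varphi)\dot x$.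 *)

theory Defs
  imports "HOL-Analysis.Analysis"
begin

text \<open>The ambient type is a real vector space with a Hausdorff topology (class t2_space);
  the predicate below adds continuity of the vector operations, local convexity
  (0 has a basis of convex open neighbourhoods) and sequential completeness.\<close>

definition lcs_type :: "'v::{real_vector,t2_space} itself \<Rightarrow> bool" where
  "lcs_type _ \<longleftrightarrow>
     continuous_on UNIV (\<lambda>p::'v \<times> 'v. fst p + snd p) \<and>
     continuous_on UNIV (\<lambda>p::real \<times> 'v. fst p *\<^sub>R snd p) \<and>
     (\<forall>U::'v set. open U \<and> 0 \<in> U \<longrightarrow> (\<exists>W. open W \<and> convex W \<and> 0 \<in> W \<and> W \<subseteq> U)) \<and>
     (\<forall>X::nat \<Rightarrow> 'v.
        (\<forall>U. open U \<and> 0 \<in> U \<longrightarrow> (\<exists>N. \<forall>m\<ge>N. \<forall>n\<ge>N. X m - X n \<in> U))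
        \<longrightarrow> (\<exists>L. X \<longlonglongrightarrow> L))"

definition dd :: "('a::real_vector \<Rightarrow> 'b::{real_vector,t2_space}) \<Rightarrow> 'a \<Rightarrow> 'a \<Rightarrow> 'b" where
  "dd f v \<xi> = Lim (at (0::real)) (\<lambda>t. (f (v + t *\<^sub>R \<xi>) - f v) /\<^sub>R t)"

definition C1_on :: "'a::{real_vector,t2_space} set \<Rightarrow> ('a \<Rightarrow> 'b::{real_vector,t2_space}) \<Rightarrow> bool" where
  "C1_on U f \<longleftrightarrow>
     (\<forall>v\<in>U. \<forall>\<xi>. ((\<lambda>t::real. (f (v + t *\<^sub>R \<xi>) - f v) /\<^sub>R t) \<longlongrightarrow> dd f v \<xi>) (at 0)) \<and>
     continuous_on (U \<times> UNIV) (\<lambda>(v, \<xi>). dd f v \<xi>)"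

definition vderiv :: "real set \<Rightarrow> (real \<Rightarrow> 'v::{real_vector,t2_space}) \<Rightarrow> real \<Rightarrow> 'v" where
  "vderiv J f t = Lim (at t within J) (\<lambda>s. (f s - f t) /\<^sub>R (s - t))"

definition has_vd :: "real set \<Rightarrow> (real \<Rightarrow> 'v::{real_vector,t2_space}) \<Rightarrow> real \<Rightarrow> bool" where
  "has_vd J f t \<longleftrightarrow> ((\<lambda>s. (f s - f t) /\<^sub>R (s - t)) \<longlongrightarrow> vderiv J f t) (at t within J)"

definition C1_curve :: "real set \<Rightarrow> (real \<Rightarrow> 'v::{real_vector,t2_space}) \<Rightarrow> bool" where
  "C1_curve J f \<longleftrightarrow> (\<forall>t\<in>J. has_vd J f t) \<and> continuous_on J (vderiv J f)"

definition C2_curve :: "real set \<Rightarrow> (real \<Rightarrow> 'v::{real_vector,t2_space}) \<Rightarrow> bool" where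
  "C2_curve J f \<longleftrightarrow> C1_curve J f \<and> C1_curve J (vderiv J f)"

definition twice_diff_at :: "real set \<Rightarrow> (real \<Rightarrow> 'v::{real_vector,t2_space}) \<Rightarrow> real \<Rightarrow> bool" where
  "twice_diff_at J f \<tau> \<longleftrightarrow>
     (\<exists>e>0. \<forall>t\<in>J \<inter> ball \<tau> e. has_vd J f t) \<and> has_vd J (vderiv J f) \<tau>"

definition riem_metric :: "'v::real_vector set \<Rightarrow> ('v \<Rightarrow> 'v \<Rightarrow> 'v \<Rightarrow> real) \<Rightarrow> bool" where
  "riem_metric \<Omega> g \<longleftrightarrow> (\<forall>v\<in>\<Omega>.
     (\<forall>a b. g v a b = g v b a) \<and>
     (\<forall>b. linear (\<lambda>a. g v a b)) \<and> (\<forall>a. linear (\<lambda>b. g v a b)) \<and>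
     (\<forall>a. a \<noteq> 0 \<longrightarrow> g v a a > 0))"

definition covD :: "('v \<Rightarrow> 'v \<Rightarrow> 'v \<Rightarrow> 'v) \<Rightarrow> 'v \<Rightarrow> ('v::{real_vector,t2_space} \<Rightarrow> 'v) \<Rightarrow> 'v \<Rightarrow> 'v" where
  "covD A \<xi> \<phi> v = dd \<phi> v \<xi> + A v \<xi> (\<phi> v)"

text \<open>A v \<xi> w stands for A(v,\<xi>)w.\<close>
definition levi_civita :: "'v::{real_vector,t2_space} set \<Rightarrow> ('v \<Rightarrow> 'v \<Rightarrow> 'v \<Rightarrow> real)
      \<Rightarrow> ('v \<Rightarrow> 'v \<Rightarrow> 'v \<Rightarrow> 'v) \<Rightarrow> bool" where
  "levi_civita \<Omega> g A \<longleftrightarrow>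
     (\<forall>v\<in>\<Omega>. \<forall>\<xi>. linear (A v \<xi>) \<and> continuous_on UNIV (A v \<xi>)) \<and>
     (\<forall>v\<in>\<Omega>. \<forall>w. linear (\<lambda>\<xi>. A v \<xi> w)) \<and>
     continuous_on (\<Omega> \<times> UNIV \<times> UNIV) (\<lambda>(v, \<xi>, w). A v \<xi> w) \<and>
     (\<forall>v\<in>\<Omega>. \<forall>\<xi> \<eta>. A v \<xi> \<eta> = A v \<eta> \<xi>) \<and>
     (\<forall>\<xi> \<phi> \<psi>. C1_on \<Omega> \<phi> \<and> C1_on \<Omega> \<psi> \<longrightarrow>
        (\<forall>v\<in>\<Omega>. ((\<lambda>t::real. (g (v + t *\<^sub>R \<xi>) (\<phi> (v + t *\<^sub>R \<xi>)) (\<psi> (v + t *\<^sub>R \<xi>))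
                               - g v (\<phi> v) (\<psi> v)) / t)
                 \<longlongrightarrow> g v (covD A \<xi> \<phi> v) (\<psi> v) + g v (\<phi> v) (covD A \<xi> \<psi> v)) (at 0)))"

definition curv :: "('v::{real_vector,t2_space} \<Rightarrow> 'v \<Rightarrow> 'v \<Rightarrow> 'v) \<Rightarrow> 'v \<Rightarrow> 'v \<Rightarrow> 'v \<Rightarrow> 'v \<Rightarrow> 'v" where
  "curv A v \<xi> \<eta> w = dd (\<lambda>u. A u \<eta> w) v \<xi> - dd (\<lambda>u. A u \<xi> w) v \<eta>
                      + A v \<xi> (A v \<eta> w) - A v \<eta> (A v \<xi> w)"

definition covD_curve :: "('v \<Rightarrow> 'v \<Rightarrow> 'v \<Rightarrow> 'v) \<Rightarrow> real set \<Rightarrow> (real \<Rightarrow> 'v::{real_vector,t2_space})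
      \<Rightarrow> (real \<Rightarrow> 'v) \<Rightarrow> real \<Rightarrow> 'v" where
  "covD_curve A J x \<phi> t = vderiv J \<phi> t + A (x t) (vderiv J x t) (\<phi> t)"

definition geodesic :: "'v::{real_vector,t2_space} set \<Rightarrow> ('v \<Rightarrow> 'v \<Rightarrow> 'v \<Rightarrow> 'v) \<Rightarrow> real set
      \<Rightarrow> (real \<Rightarrow> 'v) \<Rightarrow> bool" where
  "geodesic \<Omega> A I x \<longleftrightarrow> C2_curve I x \<and> x ` I \<subseteq> \<Omega> \<and>
     (\<forall>t\<in>I. covD_curve A I x (vderiv I x) t = 0)"

definition jacobi_field :: "('v::{real_vector,t2_space} \<Rightarrow> 'v \<Rightarrow> 'v \<Rightarrow> 'v) \<Rightarrow> (real \<Rightarrow> 'v) \<Rightarrow> real set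
      \<Rightarrow> (real \<Rightarrow> 'v) \<Rightarrow> bool" where
  "jacobi_field A x J \<phi> \<longleftrightarrow> C2_curve J \<phi> \<and>
     (\<forall>t\<in>J. covD_curve A J x (covD_curve A J x \<phi>) t
              = curv A (x t) (vderiv J x t) (\<phi> t) (vderiv J x t))"

end

theory Submission
  imports Defs
begin

definition tvs_ops :: "'a::{real_vector,t2_space} itself \<Rightarrow> bool" where
  "tvs_ops _ \<longleftrightarrow> continuous_on UNIV (\<lambda>p::'a \<times> 'a. fst p + snd p) \<and>
     continuous_on UNIV (\<lambda>p::real \<times> 'a. fst p *\<^sub>R snd p)"

lemma tvs_add:
  assumes "tvs_ops TYPE('a::{real_vector,t2_space})"
    and "(f \<longlongrightarrow> a) F" "(g \<longlongrightarrow> b) F"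
  shows "((\<lambda>k. f k + g k :: 'a) \<longlongrightarrow> a + b) F"
proof -
  have c: "isCont (\<lambda>p::'a \<times> 'a. fst p + snd p) (a, b)"
    using assms(1) unfolding tvs_ops_def by (simp add: continuous_on_eq_continuous_at)
  from isCont_tendsto_compose[OF c tendsto_Pair[OF assms(2,3)]] show ?thesis by simp
qed

lemma tvs_scale:
  assumes "tvs_ops TYPE('a::{real_vector,t2_space})"
    and "(f \<longlongrightarrow> a) F" "(g \<longlongrightarrow> b) F"
  shows "((\<lambda>k. f k *\<^sub>R g k :: 'a) \<longlongrightarrow> a *\<^sub>R b) F"
proof -
  have c: "isCont (\<lambda>p::real \<times> 'a. fst p *\<^sub>R snd p) (a, b)"
    using assms(1) unfolding tvs_ops_def by (simp add: continuous_on_eq_continuous_at)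
  from isCont_tendsto_compose[OF c tendsto_Pair[OF assms(2,3)]] show ?thesis by simp
qed

lemma tvs_intro:
  assumes "\<And>(f::'a\<times>'a \<Rightarrow> 'a) g a b F. (f \<longlongrightarrow> a) F \<Longrightarrow> (g \<longlongrightarrow> b) F \<Longrightarrow> ((\<lambda>k. f k + g k) \<longlongrightarrow> a + b) F"
    and "\<And>(f::real\<times>'a \<Rightarrow> real) (g::real\<times>'a \<Rightarrow> 'a) a b F. (f \<longlongrightarrow> a) F \<Longrightarrow> (g \<longlongrightarrow> b) F \<Longrightarrow> ((\<lambda>k. f k *\<^sub>R g k) \<longlongrightarrow> a *\<^sub>R b) F"
  shows "tvs_ops TYPE('a::{real_vector,t2_space})"
  unfolding tvs_ops_def
proof (intro conjI)
  show "continuous_on UNIV (\<lambda>p::'a \<times> 'a. fst p + snd p)"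
    unfolding continuous_on_eq_continuous_at[OF open_UNIV]
  proof
    fix p :: "'a \<times> 'a"
    show "isCont (\<lambda>p::'a \<times> 'a. fst p + snd p) p"
      unfolding isCont_def
      by (rule assms(1)) (auto intro: tendsto_fst tendsto_snd tendsto_ident_at)
  qed
  show "continuous_on UNIV (\<lambda>p::real \<times> 'a. fst p *\<^sub>R snd p)"
    unfolding continuous_on_eq_continuous_at[OF open_UNIV]
  proof
    fix p :: "real \<times> 'a"
    show "isCont (\<lambda>p::real \<times> 'a. fst p *\<^sub>R snd p) p"
      unfolding isCont_def
      by (rule assms(2)) (auto intro: tendsto_fst tendsto_snd tendsto_ident_at)
  qed
qed

lemma tvs_prod:
  assumes a: "tvs_ops TYPE('a::{real_vector,t2_space})"
    and b: "tvs_ops TYPE('b::{real_vector,t2_space})"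
  shows "tvs_ops TYPE('a \<times> 'b)"
proof (rule tvs_intro)
  fix f g :: "('a \<times> 'b) \<times> ('a \<times> 'b) \<Rightarrow> 'a \<times> 'b" and p q F
  assume f: "(f \<longlongrightarrow> p) F" and g: "(g \<longlongrightarrow> q) F"
  have 1: "((\<lambda>k. fst (f k) + fst (g k)) \<longlongrightarrow> fst p + fst q) F"
    by (rule tvs_add[OF a]) (auto intro: tendsto_fst f g)
  have 2: "((\<lambda>k. snd (f k) + snd (g k)) \<longlongrightarrow> snd p + snd q) F"
    by (rule tvs_add[OF b]) (auto intro: tendsto_snd f g)
  from tendsto_Pair[OF 1 2] show "((\<lambda>k. f k + g k) \<longlongrightarrow> p + q) F"
    by (simp add: plus_prod_def case_prod_beta)
next
  fix f :: "real \<times> ('a \<times> 'b) \<Rightarrow> real" and g :: "real \<times> ('a \<times> 'b) \<Rightarrow> 'a \<times> 'b" and p q F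
  assume f: "(f \<longlongrightarrow> p) F" and g: "(g \<longlongrightarrow> q) F"
  have 1: "((\<lambda>k. f k *\<^sub>R fst (g k)) \<longlongrightarrow> p *\<^sub>R fst q) F"
    by (rule tvs_scale[OF a]) (auto intro: tendsto_fst f g)
  have 2: "((\<lambda>k. f k *\<^sub>R snd (g k)) \<longlongrightarrow> p *\<^sub>R snd q) F"
    by (rule tvs_scale[OF b]) (auto intro: tendsto_snd f g)
  from tendsto_Pair[OF 1 2] show "((\<lambda>k. f k *\<^sub>R g k) \<longlongrightarrow> p *\<^sub>R q) F"
    by (simp add: scaleR_prod_def case_prod_beta)
qed

lemma lcs_tvs: "lcs_type TYPE('v::{real_vector,t2_space}) \<Longrightarrow> tvs_ops TYPE('v)"
  unfolding lcs_type_def tvs_ops_def by blast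


lemma dd_deriv:
  fixes G :: "'a::{real_vector,t2_space} \<Rightarrow> real"
  assumes C1: "C1_on U G" and v: "Y + r *\<^sub>R Z \<in> U"
  shows "((\<lambda>s. G (Y + s *\<^sub>R Z)) has_real_derivative dd G (Y + r *\<^sub>R Z) Z) (at r)"
proof -
  have lim: "((\<lambda>t. (G ((Y + r *\<^sub>R Z) + t *\<^sub>R Z) - G (Y + r *\<^sub>R Z)) /\<^sub>R t) \<longlongrightarrow> dd G (Y + r *\<^sub>R Z) Z) (at 0)"
    using C1 v unfolding C1_on_def by blast
  have eq: "(\<lambda>h. (G (Y + (r + h) *\<^sub>R Z) - G (Y + r *\<^sub>R Z)) / (r + h - r))
      = (\<lambda>t. (G ((Y + r *\<^sub>R Z) + t *\<^sub>R Z) - G (Y + r *\<^sub>R Z)) /\<^sub>R t)"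
    by (rule ext) (simp add: scaleR_add_left add.assoc divide_inverse mult.commute)
  show ?thesis
    unfolding has_field_derivative_iff
    apply (subst LIM_offset_zero_iff)
     apply simp
    using lim eq by simp
qed

lemma dd_mvt:
  fixes G :: "'a::{real_vector,t2_space} \<Rightarrow> real"
  assumes C1: "C1_on U G" and H: "H \<noteq> 0" and seg: "\<forall>c\<in>{0..1}. Y + (c * H) *\<^sub>R Z \<in> U"
  shows "\<exists>c\<in>{0..1}. (G (Y + H *\<^sub>R Z) - G Y) / H = dd G (Y + (c * H) *\<^sub>R Z) Z"
proof -
  define \<phi> where "\<phi> s = G (Y + s *\<^sub>R Z)" for s
  have D: "(\<phi> has_real_derivative dd G (Y + (c * H) *\<^sub>R Z) Z) (at (c * H))" if "c \<in> {0..1}" for c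
    unfolding \<phi>_def by (rule dd_deriv[OF C1]) (use seg that in auto)
  show ?thesis
  proof (cases "H > 0")
    case True
    have cont: "continuous_on {0..H} \<phi>"
    proof (rule continuous_at_imp_continuous_on, intro ballI)
      fix s assume s: "s \<in> {0..H}"
      hence "s / H \<in> {0..1}" using True by (auto simp: field_simps)
      from D[OF this] have "(\<phi> has_real_derivative dd G (Y + (s / H * H) *\<^sub>R Z) Z) (at (s / H * H))" .
      hence "(\<phi> has_real_derivative dd G (Y + s *\<^sub>R Z) Z) (at s)" using True by simp
      thus "isCont \<phi> s" by (rule DERIV_isCont)
    qed
    have ex: "\<exists>l z. 0 < z \<and> z < H \<and> (\<phi> has_real_derivative l) (at z) \<and> \<phi> H - \<phi> 0 = (H - 0) * l"
    proof (rule MVT[OF True cont])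
      fix s assume "0 < s" "s < H"
      hence "s / H \<in> {0..1}" using True by (auto simp: field_simps)
      from D[OF this] have "(\<phi> has_real_derivative dd G (Y + (s / H * H) *\<^sub>R Z) Z) (at (s / H * H))" .
      hence "(\<phi> has_real_derivative dd G (Y + s *\<^sub>R Z) Z) (at s)" using True by simp
      thus "\<phi> differentiable at s" using real_differentiable_def by blast
    qed
    then obtain l z where z: "0 < z" "z < H" "(\<phi> has_real_derivative l) (at z)" "\<phi> H - \<phi> 0 = (H - 0) * l"
      by blast
    have c: "z / H \<in> {0..1}" using z True by auto
    have "(\<phi> has_real_derivative dd G (Y + (z / H * H) *\<^sub>R Z) Z) (at (z / H * H))" using D[OF c] .
    hence "(\<phi> has_real_derivative dd G (Y + (z / H * H) *\<^sub>R Z) Z) (at z)" using True by simp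
    hence "l = dd G (Y + (z / H * H) *\<^sub>R Z) Z" using z(3) DERIV_unique by blast
    thus ?thesis using z(4) c H unfolding \<phi>_def by (intro bexI[of _ "z / H"]) auto
  next
    case False
    hence Hn: "H < 0" using H by auto
    have cont: "continuous_on {H..0} \<phi>"
    proof (rule continuous_at_imp_continuous_on, intro ballI)
      fix s assume s: "s \<in> {H..0}"
      hence "s / H \<in> {0..1}" using Hn by (auto simp: field_simps)
      from D[OF this] have "(\<phi> has_real_derivative dd G (Y + (s / H * H) *\<^sub>R Z) Z) (at (s / H * H))" .
      hence "(\<phi> has_real_derivative dd G (Y + s *\<^sub>R Z) Z) (at s)" using Hn by simp
      thus "isCont \<phi> s" by (rule DERIV_isCont)
    qed
    have ex: "\<exists>l z. H < z \<and> z < 0 \<and> (\<phi> has_real_derivative l) (at z) \<and> \<phi> 0 - \<phi> H = (0 - H) * l"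
    proof (rule MVT[OF Hn cont])
      fix s assume "H < s" "s < 0"
      hence "s / H \<in> {0..1}" using Hn by (auto simp: field_simps)
      from D[OF this] have "(\<phi> has_real_derivative dd G (Y + (s / H * H) *\<^sub>R Z) Z) (at (s / H * H))" .
      hence "(\<phi> has_real_derivative dd G (Y + s *\<^sub>R Z) Z) (at s)" using Hn by simp
      thus "\<phi> differentiable at s" using real_differentiable_def by blast
    qed
    then obtain l z where z: "H < z" "z < 0" "(\<phi> has_real_derivative l) (at z)" "\<phi> 0 - \<phi> H = (0 - H) * l"
      by blast
    have c: "z / H \<in> {0..1}" using z Hn by (auto simp: field_simps)
    have "(\<phi> has_real_derivative dd G (Y + (z / H * H) *\<^sub>R Z) Z) (at (z / H * H))" using D[OF c] .
    hence "(\<phi> has_real_derivative dd G (Y + (z / H * H) *\<^sub>R Z) Z) (at z)" using Hn by simp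
    hence "l = dd G (Y + (z / H * H) *\<^sub>R Z) Z" using z(3) DERIV_unique by blast
    moreover have "(\<phi> H - \<phi> 0) / H = l" using z(4) H by (simp add: field_simps)
    ultimately show ?thesis using c unfolding \<phi>_def by (intro bexI[of _ "z / H"]) auto
  qed
qed


lemma dd_quot_tendsto:
  fixes G :: "'a::{real_vector,t2_space} \<Rightarrow> real"
  assumes tvs: "tvs_ops TYPE('a)" and C1: "C1_on U G" and pU: "p \<in> U"
    and y: "(y \<longlongrightarrow> p) F" and z: "(z \<longlongrightarrow> z0) F" and h: "(h \<longlongrightarrow> 0) F"
    and ev: "eventually (\<lambda>k. h k \<noteq> 0 \<and> (\<forall>c\<in>{0..1}. y k + (c * h k) *\<^sub>R z k \<in> U)) F"
  shows "((\<lambda>k. (G (y k + h k *\<^sub>R z k) - G (y k)) / h k) \<longlongrightarrow> dd G p z0) F"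
proof -
  define P where "P k c \<longleftrightarrow> c \<in> {0..1::real} \<and> y k + (c * h k) *\<^sub>R z k \<in> U \<and>
      (G (y k + h k *\<^sub>R z k) - G (y k)) / h k = dd G (y k + (c * h k) *\<^sub>R z k) (z k)" for k c
  define cc where "cc k = (SOME c. P k c)" for k
  have evP: "eventually (\<lambda>k. P k (cc k)) F"
    using ev
  proof (rule eventually_mono)
    fix k assume k: "h k \<noteq> 0 \<and> (\<forall>c\<in>{0..1}. y k + (c * h k) *\<^sub>R z k \<in> U)"
    then obtain c where "c \<in> {0..1}" "(G (y k + h k *\<^sub>R z k) - G (y k)) / h k = dd G (y k + (c * h k) *\<^sub>R z k) (z k)"
      using dd_mvt[OF C1] by blast
    hence "P k c" using k unfolding P_def by blast
    thus "P k (cc k)" unfolding cc_def by (rule someI)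
  qed
  have ch: "((\<lambda>k. cc k * h k) \<longlongrightarrow> 0) F"
  proof (rule tendsto_sandwich[of "\<lambda>k. - \<bar>h k\<bar>" _ _ "\<lambda>k. \<bar>h k\<bar>"])
    have ab: "\<bar>c * hh\<bar> \<le> \<bar>hh\<bar>" if "c \<in> {0..1::real}" for c hh :: real
      using that by (simp add: abs_mult mult_left_le_one_le)
    show "eventually (\<lambda>k. - \<bar>h k\<bar> \<le> cc k * h k) F"
      using evP proof (rule eventually_mono)
      fix k assume "P k (cc k)" hence "\<bar>cc k * h k\<bar> \<le> \<bar>h k\<bar>" using ab unfolding P_def by blast
      thus "- \<bar>h k\<bar> \<le> cc k * h k" by linarith
    qed
    show "eventually (\<lambda>k. cc k * h k \<le> \<bar>h k\<bar>) F"
      using evP proof (rule eventually_mono)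
      fix k assume "P k (cc k)" hence "\<bar>cc k * h k\<bar> \<le> \<bar>h k\<bar>" using ab unfolding P_def by blast
      thus "cc k * h k \<le> \<bar>h k\<bar>" by linarith
    qed
    show "((\<lambda>k. - \<bar>h k\<bar>) \<longlongrightarrow> 0) F" using tendsto_minus[OF tendsto_rabs[OF h]] by simp
    show "((\<lambda>k. \<bar>h k\<bar>) \<longlongrightarrow> 0) F" using tendsto_rabs[OF h] by simp
  qed
  have w: "((\<lambda>k. y k + (cc k * h k) *\<^sub>R z k) \<longlongrightarrow> p) F"
    using tvs_add[OF tvs y tvs_scale[OF tvs ch z]] by simp
  have cont: "continuous_on (U \<times> UNIV) (\<lambda>(v, \<xi>). dd G v \<xi>)"
    using C1 unfolding C1_on_def by blast
  have "((\<lambda>k. (\<lambda>(v, \<xi>). dd G v \<xi>) (y k + (cc k * h k) *\<^sub>R z k, z k)) \<longlongrightarrow> (\<lambda>(v, \<xi>). dd G v \<xi>) (p, z0)) F"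
    by (rule continuous_on_tendsto_compose[OF cont tendsto_Pair[OF w z]])
      (use pU evP in \<open>auto simp: P_def elim: eventually_mono\<close>)
  hence "((\<lambda>k. dd G (y k + (cc k * h k) *\<^sub>R z k) (z k)) \<longlongrightarrow> dd G p z0) F" by simp
  thus ?thesis
    by (rule Lim_transform_eventually) (use evP in \<open>auto simp: P_def elim: eventually_mono\<close>)
qed


lemma vd_intro:
  assumes "((\<lambda>s. (f s - f t) /\<^sub>R (s - t)) \<longlongrightarrow> L) (at t within S)" "at t within S \<noteq> bot"
  shows "has_vd S f t \<and> vderiv S f t = L"
proof -
  have "vderiv S f t = L" unfolding vderiv_def using tendsto_Lim[OF assms(2,1)] .
  thus ?thesis using assms(1) unfolding has_vd_def by simp
qed

lemma vd_lim:
  assumes "has_vd S f t"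
  shows "((\<lambda>s. (f s - f t) /\<^sub>R (s - t)) \<longlongrightarrow> vderiv S f t) (at t within S)"
  using assms unfolding has_vd_def .

lemma vd_cont:
  fixes f :: "real \<Rightarrow> 'v::{real_vector,t2_space}"
  assumes tvs: "tvs_ops TYPE('v)" and lim: "((\<lambda>s. (f s - f t) /\<^sub>R (s - t)) \<longlongrightarrow> L) (at t within S)"
  shows "(f \<longlongrightarrow> f t) (at t within S)"
proof -
  have h: "((\<lambda>s. s - t) \<longlongrightarrow> 0) (at t within S)"
    using tendsto_diff[OF tendsto_ident_at[of t S] tendsto_const[of t]] by simp
  have "((\<lambda>s. (s - t) *\<^sub>R ((f s - f t) /\<^sub>R (s - t)) + f t) \<longlongrightarrow> 0 *\<^sub>R L + f t) (at t within S)"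
    by (rule tvs_add[OF tvs tvs_scale[OF tvs h lim] tendsto_const])
  hence "((\<lambda>s. (s - t) *\<^sub>R ((f s - f t) /\<^sub>R (s - t)) + f t) \<longlongrightarrow> f t) (at t within S)" by simp
  thus ?thesis
    by (rule Lim_transform_eventually) (auto simp: eventually_at_filter)
qed

lemma interval_nontriv:
  fixes S :: "real set"
  assumes S: "is_interval S" and u: "u \<in> S" and w: "w \<in> S" and uw: "u \<noteq> w" and t: "t \<in> S"
  shows "at t within S \<noteq> bot"
proof -
  have "\<exists>a b. a \<in> S \<and> b \<in> S \<and> a < b \<and> a \<le> t \<and> t \<le> b"
  proof (cases "t < u")
    case True thus ?thesis using t u by (intro exI[of _ t] exI[of _ u]) simp
  next
    case f1: False
    show ?thesis
    proof (cases "t < w")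
      case True thus ?thesis using t w by (intro exI[of _ t] exI[of _ w]) simp
    next
      case False
      show ?thesis
      proof (cases "u < t")
        case True thus ?thesis using t u by (intro exI[of _ u] exI[of _ t]) simp
      next
        case False
        hence "w < t" using f1 \<open>\<not> t < w\<close> uw by linarith
        thus ?thesis using t w by (intro exI[of _ w] exI[of _ t]) simp
      qed
    qed
  qed
  then obtain a b where ab: "a \<in> S" "b \<in> S" "a < b" "a \<le> t" "t \<le> b" by blast
  have sub: "{a..b} \<subseteq> S"
  proof
    fix x assume "x \<in> {a..b}"
    have I1: "\<forall>a\<in>S. \<forall>b\<in>S. \<forall>x. a \<le> x \<and> x \<le> b \<longrightarrow> x \<in> S" using S is_interval_1 by blast
    have "a \<le> x \<and> x \<le> b \<longrightarrow> x \<in> S" using bspec[OF bspec[OF I1 ab(1)] ab(2)] by blast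
    thus "x \<in> S" using \<open>x \<in> {a..b}\<close> by simp
  qed
  have "t islimpt {a..b}" using islimpt_Icc[OF ab(3)] ab(4,5) by simp
  hence "t islimpt S" using islimpt_subset[OF _ sub] by blast
  thus ?thesis using trivial_limit_within by blast
qed

lemma vd_restrict:
  assumes "S \<subseteq> I" "at t within S \<noteq> bot" "has_vd I f t"
  shows "has_vd S f t \<and> vderiv S f t = vderiv I f t"
  by (rule vd_intro[OF tendsto_within_subset[OF vd_lim[OF assms(3)] assms(1)] assms(2)])

lemma convex_seg:
  fixes \<Omega> :: "'v::{real_vector,t2_space} set"
  assumes lcs: "lcs_type TYPE('v)" and \<Omega>: "open \<Omega>" and v: "v \<in> \<Omega>" and d: "(d \<longlongrightarrow> 0) F"
  shows "eventually (\<lambda>k. \<forall>c\<in>{0..1}. v + c *\<^sub>R d k \<in> \<Omega>) F"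
proof -
  have tvs: "tvs_ops TYPE('v)" using lcs by (rule lcs_tvs)
  have ct: "continuous_on UNIV (\<lambda>u::'v. v + u)"
    unfolding continuous_on_eq_continuous_at[OF open_UNIV] isCont_def
    using tvs_add[OF tvs tendsto_const tendsto_ident_at] by blast
  define U0 where "U0 = (\<lambda>u. v + u) -` \<Omega>"
  have "open U0" using ct \<Omega> unfolding U0_def continuous_on_open_vimage[OF open_UNIV] by simp
  moreover have "0 \<in> U0" using v unfolding U0_def by simp
  ultimately obtain W where W: "open W" "convex W" "0 \<in> W" "W \<subseteq> U0"
    using lcs unfolding lcs_type_def by (meson \<open>open U0\<close> \<open>0 \<in> U0\<close>)
  have "eventually (\<lambda>k. d k \<in> W) F" using topological_tendstoD[OF d W(1,3)] .
  thus ?thesis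
  proof (rule eventually_mono)
    fix k assume dk: "d k \<in> W"
    show "\<forall>c\<in>{0..1}. v + c *\<^sub>R d k \<in> \<Omega>"
    proof
      fix c :: real assume c: "c \<in> {0..1}"
      have "(1 - c) *\<^sub>R 0 + c *\<^sub>R d k \<in> W"
        by (rule convexD[OF W(2) W(3) dk]) (use c in auto)
      hence "c *\<^sub>R d k \<in> U0" using W(4) by auto
      thus "v + c *\<^sub>R d k \<in> \<Omega>" unfolding U0_def by simp
    qed
  qed
qed


lemma dd_const: "dd (\<lambda>_. c) v \<xi> = (0::'b::{real_vector,t2_space})"
  unfolding dd_def by (rule tendsto_Lim) (simp_all)

lemma C1_const: "C1_on U (\<lambda>_. c::'b::{real_vector,t2_space})"
  unfolding C1_on_def dd_const by simp

lemma dd_eqI: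
  assumes "((\<lambda>t. (f (v + t *\<^sub>R \<xi>) - f v) /\<^sub>R t) \<longlongrightarrow> L) (at (0::real))"
  shows "dd f v \<xi> = (L::'b::{real_vector,t2_space})"
  unfolding dd_def by (rule tendsto_Lim) (simp_all add: assms)

lemma g_lin2:
  assumes "riem_metric \<Omega> g" "v \<in> \<Omega>"
  shows "g v (a + a') b = g v a b + g v a' b" "g v (r *\<^sub>R a) b = r * g v a b"
    "g v a (b + b') = g v a b + g v a b'" "g v a (r *\<^sub>R b) = r * g v a b"
    "g v 0 b = 0" "g v a 0 = 0" "g v (a - a') b = g v a b - g v a' b" "g v a (b - b') = g v a b - g v a b'"
proof -
  have l1: "linear (\<lambda>a. g v a b)" for b using assms unfolding riem_metric_def by blast
  have l2: "linear (\<lambda>b. g v a b)" for a using assms unfolding riem_metric_def by blast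
  show "g v (a + a') b = g v a b + g v a' b" using linear_add[OF l1] by simp
  show "g v (r *\<^sub>R a) b = r * g v a b" using linear_cmul[OF l1] by simp
  show "g v a (b + b') = g v a b + g v a b'" using linear_add[OF l2] by simp
  show "g v a (r *\<^sub>R b) = r * g v a b" using linear_cmul[OF l2] by simp
  show "g v 0 b = 0" using linear_0[OF l1] by simp
  show "g v a 0 = 0" using linear_0[OF l2] by simp
  show "g v (a - a') b = g v a b - g v a' b" using linear_diff[OF l1] by simp
  show "g v a (b - b') = g v a b - g v a b'" using linear_diff[OF l2] by simp
qed

lemma dd_G_mid:
  assumes "riem_metric \<Omega> g" "v \<in> \<Omega>"
  shows "dd (\<lambda>(v, a, b). g v a b) (v, a, b) (0, \<alpha>, 0) = g v \<alpha> b"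
proof (rule dd_eqI)
  have "((\<lambda>t::real. g v \<alpha> b) \<longlongrightarrow> g v \<alpha> b) (at 0)" by simp
  thus "((\<lambda>t. ((\<lambda>(v, a, b). g v a b) ((v, a, b) + t *\<^sub>R (0, \<alpha>, 0)) - (\<lambda>(v, a, b). g v a b) (v, a, b)) /\<^sub>R t)
      \<longlongrightarrow> g v \<alpha> b) (at 0)"
    by (rule Lim_transform_eventually) (auto simp: eventually_at_filter g_lin2[OF assms])
qed

lemma contG:
  fixes g :: "'v::{real_vector,t2_space} \<Rightarrow> 'v \<Rightarrow> 'v \<Rightarrow> real"
  assumes riem: "riem_metric \<Omega> g" and C1G: "C1_on (\<Omega> \<times> UNIV \<times> UNIV) (\<lambda>(v, a, b). g v a b)"
    and a: "(a \<longlongrightarrow> a0) F" "a0 \<in> \<Omega>" "eventually (\<lambda>k. a k \<in> \<Omega>) F"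
    and b: "(b \<longlongrightarrow> b0) F" and c: "(c \<longlongrightarrow> c0) F"
  shows "((\<lambda>k. g (a k) (b k) (c k)) \<longlongrightarrow> g a0 b0 c0) F"
proof -
  let ?G = "\<lambda>(v, a, b). g v a b"
  have cont: "continuous_on ((\<Omega> \<times> UNIV \<times> UNIV) \<times> UNIV) (\<lambda>(p, \<xi>). dd ?G p \<xi>)"
    using C1G unfolding C1_on_def by blast
  have t: "((\<lambda>k. ((a k, 0::'v, c k), (0::'v, b k, 0::'v))) \<longlongrightarrow> ((a0, 0, c0), (0, b0, 0))) F"
    by (intro tendsto_Pair a b c tendsto_const)
  have "((\<lambda>k. (\<lambda>(p, \<xi>). dd ?G p \<xi>) ((a k, 0, c k), (0, b k, 0))) \<longlongrightarrow> (\<lambda>(p, \<xi>). dd ?G p \<xi>) ((a0, 0, c0), (0, b0, 0))) F"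
    by (rule continuous_on_tendsto_compose[OF cont t]) (use a in \<open>auto elim: eventually_mono\<close>)
  hence "((\<lambda>k. dd ?G (a k, 0, c k) (0, b k, 0)) \<longlongrightarrow> g a0 b0 c0) F"
    using dd_G_mid[OF riem a(2)] by simp
  thus ?thesis
    by (rule Lim_transform_eventually) (use a(3) in \<open>auto elim!: eventually_mono simp: dd_G_mid[OF riem]\<close>)
qed

lemma dd_G_base:
  fixes g :: "'v::{real_vector,t2_space} \<Rightarrow> 'v \<Rightarrow> 'v \<Rightarrow> real"
  assumes LC: "levi_civita \<Omega> g A" and v: "v \<in> \<Omega>"
  shows "dd (\<lambda>(v, a, b). g v a b) (v, a, b) (w, 0, 0) = g v (A v w a) b + g v a (A v w b)"
proof (rule dd_eqI)
  have "((\<lambda>t::real. (g (v + t *\<^sub>R w) ((\<lambda>_. a) (v + t *\<^sub>R w)) ((\<lambda>_. b) (v + t *\<^sub>R w))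
                               - g v ((\<lambda>_. a) v) ((\<lambda>_. b) v)) / t)
         \<longlongrightarrow> g v (covD A w (\<lambda>_. a) v) ((\<lambda>_. b) v) + g v ((\<lambda>_. a) v) (covD A w (\<lambda>_. b) v)) (at 0)"
    using LC v C1_const[of \<Omega> a] C1_const[of \<Omega> b] unfolding levi_civita_def by blast
  thus "((\<lambda>t. ((\<lambda>(v, a, b). g v a b) ((v, a, b) + t *\<^sub>R (w, 0, 0)) - (\<lambda>(v, a, b). g v a b) (v, a, b)) /\<^sub>R t)
      \<longlongrightarrow> g v (A v w a) b + g v a (A v w b)) (at 0)"
    by (simp add: covD_def dd_const divide_inverse mult.commute)
qed


lemma gprod:
  fixes g :: "'v::{real_vector,t2_space} \<Rightarrow> 'v \<Rightarrow> 'v \<Rightarrow> real"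
  assumes lcs: "lcs_type TYPE('v)" and \<Omega>: "open \<Omega>" and riem: "riem_metric \<Omega> g"
    and C1G: "C1_on (\<Omega> \<times> UNIV \<times> UNIV) (\<lambda>(v, a, b). g v a b)" and LC: "levi_civita \<Omega> g A"
    and aS: "\<forall>s\<in>S. a s \<in> \<Omega>" and tS: "t \<in> S"
    and qa: "((\<lambda>s. (a s - a t) /\<^sub>R (s - t)) \<longlongrightarrow> a') (at t within S)"
    and qb: "((\<lambda>s. (b s - b t) /\<^sub>R (s - t)) \<longlongrightarrow> b') (at t within S)"
    and qc: "((\<lambda>s. (c s - c t) /\<^sub>R (s - t)) \<longlongrightarrow> c') (at t within S)"
  shows "((\<lambda>s. (g (a s) (b s) (c s) - g (a t) (b t) (c t)) /\<^sub>R (s - t)) \<longlongrightarrow>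
     g (a t) (A (a t) a' (b t)) (c t) + g (a t) (b t) (A (a t) a' (c t)) + g (a t) b' (c t) + g (a t) (b t) c')
     (at t within S)"
proof -
  let ?F = "at t within S"
  let ?G = "\<lambda>(v, a, b). g v a b"
  have tvs: "tvs_ops TYPE('v)" using lcs by (rule lcs_tvs)
  have tvs3: "tvs_ops TYPE('v \<times> 'v \<times> 'v)" by (intro tvs_prod tvs)
  have at: "a t \<in> \<Omega>" using aS tS by blast
  have h: "((\<lambda>s. s - t) \<longlongrightarrow> 0) ?F"
    using tendsto_diff[OF tendsto_ident_at[of t S] tendsto_const[of t]] by simp
  have bc: "(b \<longlongrightarrow> b t) ?F" using vd_cont[OF tvs qb] .
  have cc: "(c \<longlongrightarrow> c t) ?F" using vd_cont[OF tvs qc] .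
  define qa' where "qa' s = (a s - a t) /\<^sub>R (s - t)" for s
  have d0: "((\<lambda>s. (s - t) *\<^sub>R qa' s) \<longlongrightarrow> 0) ?F"
    using tvs_scale[OF tvs h qa[folded qa'_def]] by simp
  have seg: "eventually (\<lambda>s. \<forall>r\<in>{0..1}. a t + r *\<^sub>R ((s - t) *\<^sub>R qa' s) \<in> \<Omega>) ?F"
    by (rule convex_seg[OF lcs \<Omega> at d0])
  have y: "((\<lambda>s. (a t, b s, c s)) \<longlongrightarrow> (a t, b t, c t)) ?F"
    by (intro tendsto_Pair tendsto_const bc cc)
  have z: "((\<lambda>s. (qa' s, 0::'v, 0::'v)) \<longlongrightarrow> (a', 0, 0)) ?F"
    by (intro tendsto_Pair tendsto_const qa[folded qa'_def])
  have ev: "eventually (\<lambda>s. s - t \<noteq> 0 \<and> (\<forall>r\<in>{0..1}. (a t, b s, c s) + (r * (s - t)) *\<^sub>R (qa' s, 0, 0) \<in> \<Omega> \<times> UNIV \<times> UNIV)) ?F"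
    using seg unfolding eventually_at_filter by (rule eventually_mono) auto
  have P1: "((\<lambda>s. (?G ((a t, b s, c s) + (s - t) *\<^sub>R (qa' s, 0, 0)) - ?G (a t, b s, c s)) / (s - t))
      \<longlongrightarrow> dd ?G (a t, b t, c t) (a', 0, 0)) ?F"
    by (rule dd_quot_tendsto[OF tvs3 C1G _ y z h ev]) (use at in simp)
  have P1': "((\<lambda>s. (g (a s) (b s) (c s) - g (a t) (b s) (c s)) / (s - t))
      \<longlongrightarrow> g (a t) (A (a t) a' (b t)) (c t) + g (a t) (b t) (A (a t) a' (c t))) ?F"
    using P1 unfolding dd_G_base[OF LC at]
    by (rule Lim_transform_eventually) (auto simp: eventually_at_filter qa'_def)
  have P2: "((\<lambda>s. g (a t) ((b s - b t) /\<^sub>R (s - t)) (c s)) \<longlongrightarrow> g (a t) b' (c t)) ?F"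
    by (rule contG[OF riem C1G tendsto_const at _ qb cc]) (use at in simp)
  have P3: "((\<lambda>s. g (a t) (b t) ((c s - c t) /\<^sub>R (s - t))) \<longlongrightarrow> g (a t) (b t) c') ?F"
    by (rule contG[OF riem C1G tendsto_const at _ tendsto_const qc]) (use at in simp)
  have "((\<lambda>s. (g (a s) (b s) (c s) - g (a t) (b s) (c s)) / (s - t) + g (a t) ((b s - b t) /\<^sub>R (s - t)) (c s)
        + g (a t) (b t) ((c s - c t) /\<^sub>R (s - t))) \<longlongrightarrow>
     g (a t) (A (a t) a' (b t)) (c t) + g (a t) (b t) (A (a t) a' (c t)) + g (a t) b' (c t) + g (a t) (b t) c') ?F"
    by (intro tendsto_add P1' P2 P3)
  thus ?thesis
  proof (rule Lim_transform_eventually)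
    show "eventually (\<lambda>s. (g (a s) (b s) (c s) - g (a t) (b s) (c s)) / (s - t) + g (a t) ((b s - b t) /\<^sub>R (s - t)) (c s)
        + g (a t) (b t) ((c s - c t) /\<^sub>R (s - t)) = (g (a s) (b s) (c s) - g (a t) (b t) (c t)) /\<^sub>R (s - t)) ?F"
      unfolding eventually_at_filter
    proof (intro always_eventually allI impI)
      fix s assume "s \<noteq> t"
      thus "(g (a s) (b s) (c s) - g (a t) (b s) (c s)) / (s - t) + g (a t) ((b s - b t) /\<^sub>R (s - t)) (c s)
        + g (a t) (b t) ((c s - c t) /\<^sub>R (s - t)) = (g (a s) (b s) (c s) - g (a t) (b t) (c t)) /\<^sub>R (s - t)"
        by (simp add: g_lin2[OF riem at] divide_inverse algebra_simps)
    qed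
  qed
qed


lemma LC_lin:
  assumes LC: "levi_civita \<Omega> g A" and v: "v \<in> \<Omega>"
  shows "A v w (r *\<^sub>R u) = r *\<^sub>R A v w u" "A v w 0 = 0" "A v 0 u = 0"
    "A v w (u + u') = A v w u + A v w u'" "A v w (- u) = - A v w u"
proof -
  have l1: "linear (A v w)" using LC v unfolding levi_civita_def by blast
  have l2: "linear (\<lambda>w. A v w u)" using LC v unfolding levi_civita_def by blast
  show "A v w (r *\<^sub>R u) = r *\<^sub>R A v w u" using linear_cmul[OF l1] .
  show "A v w 0 = 0" using linear_0[OF l1] .
  show "A v 0 u = 0" using linear_0[OF l2] by simp
  show "A v w (u + u') = A v w u + A v w u'" using linear_add[OF l1] .
  show "A v w (- u) = - A v w u" using linear_neg[OF l1] .
qed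

lemma curv0:
  fixes A :: "'v::{real_vector,t2_space} \<Rightarrow> 'v \<Rightarrow> 'v \<Rightarrow> 'v"
  assumes tvs: "tvs_ops TYPE('v)" and LC: "levi_civita \<Omega> g A" and \<Omega>: "open \<Omega>" and v: "v \<in> \<Omega>"
  shows "curv A v w 0 u = 0"
proof -
  have "((\<lambda>t::real. v + t *\<^sub>R w) \<longlongrightarrow> v + 0 *\<^sub>R w) (at 0)"
    by (intro tvs_add[OF tvs] tvs_scale[OF tvs] tendsto_const tendsto_ident_at)
  hence ev: "eventually (\<lambda>t::real. v + t *\<^sub>R w \<in> \<Omega>) (at 0)"
    using topological_tendstoD[OF _ \<Omega>] v by simp
  have d1: "dd (\<lambda>u'. A u' 0 u) v w = 0"
  proof (rule dd_eqI)
    show "((\<lambda>t. (A (v + t *\<^sub>R w) 0 u - A v 0 u) /\<^sub>R t) \<longlongrightarrow> 0) (at 0)"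
      using tendsto_const[of "0::'v" "at (0::real)"]
      by (rule Lim_transform_eventually) (use ev in \<open>auto elim!: eventually_mono simp: LC_lin[OF LC v] LC_lin[OF LC]\<close>)
  qed
  have d2: "dd (\<lambda>u'. A u' w u) v 0 = 0"
    by (rule dd_eqI) simp
  show ?thesis unfolding curv_def d1 d2 by (simp add: LC_lin[OF LC v])
qed


lemma contA:
  fixes A :: "'v::{real_vector,t2_space} \<Rightarrow> 'v \<Rightarrow> 'v \<Rightarrow> 'v"
  assumes LC: "levi_civita \<Omega> g A"
    and p: "(p \<longlongrightarrow> p0) F" "p0 \<in> \<Omega>" "eventually (\<lambda>k. p k \<in> \<Omega>) F"
    and q: "(q \<longlongrightarrow> q0) F" and r: "(r \<longlongrightarrow> r0) F"
  shows "((\<lambda>k. A (p k) (q k) (r k)) \<longlongrightarrow> A p0 q0 r0) F"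
proof -
  have cont: "continuous_on (\<Omega> \<times> UNIV \<times> UNIV) (\<lambda>(v, \<xi>, w). A v \<xi> w)"
    using LC unfolding levi_civita_def by blast
  have "((\<lambda>k. (\<lambda>(v, \<xi>, w). A v \<xi> w) (p k, q k, r k)) \<longlongrightarrow> (\<lambda>(v, \<xi>, w). A v \<xi> w) (p0, q0, r0)) F"
    by (rule continuous_on_tendsto_compose[OF cont]) (use p q r in \<open>auto intro!: tendsto_Pair elim: eventually_mono\<close>)
  thus ?thesis by simp
qed

lemma vd_contderiv:
  assumes C: "C1_curve I f" and SI: "S \<subseteq> I" and tS: "t \<in> S" and nt: "\<And>s. s \<in> S \<Longrightarrow> at s within S \<noteq> bot"
  shows "(vderiv S f \<longlongrightarrow> vderiv S f t) (at t within S)"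
proof -
  have eq: "\<And>s. s \<in> S \<Longrightarrow> vderiv S f s = vderiv I f s"
    using vd_restrict[OF SI nt] C SI unfolding C1_curve_def by blast
  have "(vderiv I f \<longlongrightarrow> vderiv I f t) (at t within I)"
    using C tS SI unfolding C1_curve_def continuous_on_def by blast
  hence "(vderiv I f \<longlongrightarrow> vderiv I f t) (at t within S)" by (rule tendsto_within_subset[OF _ SI])
  hence "(vderiv I f \<longlongrightarrow> vderiv S f t) (at t within S)" using eq[OF tS] by simp
  thus ?thesis
    by (rule Lim_transform_eventually) (auto simp: eventually_at_filter eq)
qed


lemma main_i:
  fixes \<Omega> :: "'v::{real_vector,t2_space} set" and g :: "'v \<Rightarrow> 'v \<Rightarrow> 'v \<Rightarrow> real"
    and A :: "'v \<Rightarrow> 'v \<Rightarrow> 'v \<Rightarrow> 'v" and x \<xi> e :: "real \<Rightarrow> 'v"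
  assumes lcs: "lcs_type TYPE('v)" and \<Omega>: "open \<Omega>" and riem: "riem_metric \<Omega> g"
    and C1G: "C1_on (\<Omega> \<times> UNIV \<times> UNIV) (\<lambda>(v, a, b). g v a b)" and LC: "levi_civita \<Omega> g A"
    and xC: "C1_curve I x" and xI: "x ` I \<subseteq> \<Omega>" and \<xi>C: "C1_curve I \<xi>"
    and SI: "S \<subseteq> I" and \<tau>S: "\<tau> \<in> S" and nt: "\<And>t. t \<in> S \<Longrightarrow> at t within S \<noteq> bot"
    and jac: "jacobi_field A x S e" and e0: "e \<tau> = 0"
  shows "(\<forall>t\<in>S. has_vd S (\<lambda>t. g (x t) (\<xi> t) (e t)) t) \<and> has_vd S (vderiv S (\<lambda>t. g (x t) (\<xi> t) (e t))) \<tau> \<and>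
    vderiv S (vderiv S (\<lambda>t. g (x t) (\<xi> t) (e t))) \<tau> = 2 * g (x \<tau>) (covD_curve A I x \<xi> \<tau>) (vderiv S e \<tau>)"
proof -
  have tvs: "tvs_ops TYPE('v)" using lcs by (rule lcs_tvs)
  have xS: "\<forall>s\<in>S. x s \<in> \<Omega>" using xI SI by blast
  have x\<tau>: "x \<tau> \<in> \<Omega>" using xS \<tau>S by blast
  have hx: "has_vd S x t \<and> vderiv S x t = vderiv I x t" if "t \<in> S" for t
    using vd_restrict[OF SI nt[OF that]] xC SI that unfolding C1_curve_def by blast
  have h\<xi>: "has_vd S \<xi> t \<and> vderiv S \<xi> t = vderiv I \<xi> t" if "t \<in> S" for t
    using vd_restrict[OF SI nt[OF that]] \<xi>C SI that unfolding C1_curve_def by blast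
  have eC2: "C2_curve S e" using jac unfolding jacobi_field_def by blast
  have he: "has_vd S e t" if "t \<in> S" for t using eC2 that unfolding C2_curve_def C1_curve_def by blast
  have he1: "has_vd S (vderiv S e) t" if "t \<in> S" for t using eC2 that unfolding C2_curve_def C1_curve_def by blast
  define x1 where "x1 = vderiv S x"
  define \<xi>1 where "\<xi>1 = vderiv S \<xi>"
  define e1 where "e1 = vderiv S e"
  define e2 where "e2 = vderiv S e1 \<tau>"
  define f where "f t = g (x t) (\<xi> t) (e t)" for t
  define Ex where "Ex s = \<xi>1 s + A (x s) (x1 s) (\<xi> s)" for s
  define Ee where "Ee s = e1 s + A (x s) (x1 s) (e s)" for s
  define F1 where "F1 t = g (x t) (A (x t) (x1 t) (\<xi> t)) (e t) + g (x t) (\<xi> t) (A (x t) (x1 t) (e t))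
      + g (x t) (\<xi>1 t) (e t) + g (x t) (\<xi> t) (e1 t)" for t
  have S1: "has_vd S f t \<and> vderiv S f t = F1 t" if tS: "t \<in> S" for t
    unfolding f_def F1_def x1_def \<xi>1_def e1_def
    by (rule vd_intro[OF gprod[OF lcs \<Omega> riem C1G LC xS tS vd_lim vd_lim vd_lim] nt[OF tS]])
      (use hx h\<xi> he tS in auto)
  have F1eq: "F1 s = g (x s) (Ex s) (e s) + g (x s) (\<xi> s) (Ee s)" if "s \<in> S" for s
    using xS that unfolding F1_def Ex_def Ee_def by (simp add: g_lin2[OF riem])
  have Ee\<tau>: "Ee \<tau> = e1 \<tau>" unfolding Ee_def e0 by (simp add: LC_lin[OF LC x\<tau>])
  have F1\<tau>: "F1 \<tau> = g (x \<tau>) (\<xi> \<tau>) (Ee \<tau>)"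
    using F1eq[OF \<tau>S] by (simp add: e0 g_lin2[OF riem x\<tau>])
  let ?F = "at \<tau> within S"
  have evS: "eventually (\<lambda>s. s \<in> S) ?F" by (simp add: eventually_at_filter)
  have evxS: "eventually (\<lambda>s. x s \<in> \<Omega>) ?F" using evS by (rule eventually_mono) (use xS in blast)
  have contx: "(x \<longlongrightarrow> x \<tau>) ?F" using vd_cont[OF tvs vd_lim[of S x \<tau>]] hx[OF \<tau>S] by blast
  have cont\<xi>: "(\<xi> \<longlongrightarrow> \<xi> \<tau>) ?F" using vd_cont[OF tvs vd_lim[of S \<xi> \<tau>]] h\<xi>[OF \<tau>S] by blast
  have contx1: "(x1 \<longlongrightarrow> x1 \<tau>) ?F" unfolding x1_def by (rule vd_contderiv[OF xC SI \<tau>S nt])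
  have cont\<xi>1: "(\<xi>1 \<longlongrightarrow> \<xi>1 \<tau>) ?F" unfolding \<xi>1_def by (rule vd_contderiv[OF \<xi>C SI \<tau>S nt])
  have contEx: "(Ex \<longlongrightarrow> Ex \<tau>) ?F" unfolding Ex_def
    by (intro tvs_add[OF tvs] cont\<xi>1 contA[OF LC contx x\<tau> evxS contx1 cont\<xi>])
  have qe: "((\<lambda>s. (e s - e \<tau>) /\<^sub>R (s - \<tau>)) \<longlongrightarrow> e1 \<tau>) ?F" unfolding e1_def using vd_lim he[OF \<tau>S] by blast
  have qe1: "((\<lambda>s. (e1 s - e1 \<tau>) /\<^sub>R (s - \<tau>)) \<longlongrightarrow> e2) ?F" unfolding e2_def e1_def using vd_lim he1[OF \<tau>S] by blast
  have T1: "((\<lambda>s. g (x s) (Ex s) (e s) /\<^sub>R (s - \<tau>)) \<longlongrightarrow> g (x \<tau>) (Ex \<tau>) (e1 \<tau>)) ?F"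
  proof -
    have "((\<lambda>s. g (x s) (Ex s) ((e s - e \<tau>) /\<^sub>R (s - \<tau>))) \<longlongrightarrow> g (x \<tau>) (Ex \<tau>) (e1 \<tau>)) ?F"
      by (rule contG[OF riem C1G contx x\<tau> evxS contEx qe])
    thus ?thesis
      by (rule Lim_transform_eventually) (use evS xS in \<open>auto elim!: eventually_mono simp: e0 g_lin2[OF riem]\<close>)
  qed
  have qEe: "((\<lambda>s. (Ee s - Ee \<tau>) /\<^sub>R (s - \<tau>)) \<longlongrightarrow> e2 + A (x \<tau>) (x1 \<tau>) (e1 \<tau>)) ?F"
  proof -
    have "((\<lambda>s. (e1 s - e1 \<tau>) /\<^sub>R (s - \<tau>) + A (x s) (x1 s) ((e s - e \<tau>) /\<^sub>R (s - \<tau>))) \<longlongrightarrow> e2 + A (x \<tau>) (x1 \<tau>) (e1 \<tau>)) ?F"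
      by (rule tvs_add[OF tvs qe1 contA[OF LC contx x\<tau> evxS contx1 qe]])
    thus ?thesis
    proof (rule Lim_transform_eventually)
      show "eventually (\<lambda>s. (e1 s - e1 \<tau>) /\<^sub>R (s - \<tau>) + A (x s) (x1 s) ((e s - e \<tau>) /\<^sub>R (s - \<tau>)) = (Ee s - Ee \<tau>) /\<^sub>R (s - \<tau>)) ?F"
        using evS
      proof (rule eventually_mono)
        fix s assume "s \<in> S"
        hence xs: "x s \<in> \<Omega>" using xS by blast
        show "(e1 s - e1 \<tau>) /\<^sub>R (s - \<tau>) + A (x s) (x1 s) ((e s - e \<tau>) /\<^sub>R (s - \<tau>)) = (Ee s - Ee \<tau>) /\<^sub>R (s - \<tau>)"
          unfolding Ee\<tau> unfolding Ee_def e0 by (simp add: LC_lin[OF LC xs] algebra_simps)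
      qed
    qed
  qed
  have qx: "((\<lambda>s. (x s - x \<tau>) /\<^sub>R (s - \<tau>)) \<longlongrightarrow> x1 \<tau>) ?F" unfolding x1_def using vd_lim hx[OF \<tau>S] by blast
  have q\<xi>: "((\<lambda>s. (\<xi> s - \<xi> \<tau>) /\<^sub>R (s - \<tau>)) \<longlongrightarrow> \<xi>1 \<tau>) ?F" unfolding \<xi>1_def using vd_lim h\<xi>[OF \<tau>S] by blast
  have T2: "((\<lambda>s. (g (x s) (\<xi> s) (Ee s) - g (x \<tau>) (\<xi> \<tau>) (Ee \<tau>)) /\<^sub>R (s - \<tau>)) \<longlongrightarrow>
     g (x \<tau>) (A (x \<tau>) (x1 \<tau>) (\<xi> \<tau>)) (Ee \<tau>) + g (x \<tau>) (\<xi> \<tau>) (A (x \<tau>) (x1 \<tau>) (Ee \<tau>)) + g (x \<tau>) (\<xi>1 \<tau>) (Ee \<tau>)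
       + g (x \<tau>) (\<xi> \<tau>) (e2 + A (x \<tau>) (x1 \<tau>) (e1 \<tau>))) ?F"
    by (rule gprod[OF lcs \<Omega> riem C1G LC xS \<tau>S qx q\<xi> qEe])
  define L2 where "L2 = g (x \<tau>) (Ex \<tau>) (e1 \<tau>) + (g (x \<tau>) (A (x \<tau>) (x1 \<tau>) (\<xi> \<tau>)) (Ee \<tau>) + g (x \<tau>) (\<xi> \<tau>) (A (x \<tau>) (x1 \<tau>) (Ee \<tau>)) + g (x \<tau>) (\<xi>1 \<tau>) (Ee \<tau>)
       + g (x \<tau>) (\<xi> \<tau>) (e2 + A (x \<tau>) (x1 \<tau>) (e1 \<tau>)))"
  have S2q: "((\<lambda>s. (vderiv S f s - vderiv S f \<tau>) /\<^sub>R (s - \<tau>)) \<longlongrightarrow> L2) ?F"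
    unfolding L2_def
    using tendsto_add[OF T1 T2]
  proof (rule Lim_transform_eventually)
    show "eventually (\<lambda>s. g (x s) (Ex s) (e s) /\<^sub>R (s - \<tau>) + (g (x s) (\<xi> s) (Ee s) - g (x \<tau>) (\<xi> \<tau>) (Ee \<tau>)) /\<^sub>R (s - \<tau>)
       = (vderiv S f s - vderiv S f \<tau>) /\<^sub>R (s - \<tau>)) ?F"
      using evS
    proof (rule eventually_mono)
      fix s assume sS: "s \<in> S"
      show "g (x s) (Ex s) (e s) /\<^sub>R (s - \<tau>) + (g (x s) (\<xi> s) (Ee s) - g (x \<tau>) (\<xi> \<tau>) (Ee \<tau>)) /\<^sub>R (s - \<tau>)
       = (vderiv S f s - vderiv S f \<tau>) /\<^sub>R (s - \<tau>)"
        using S1[OF sS] S1[OF \<tau>S] F1eq[OF sS] F1\<tau> by (simp add: algebra_simps)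
    qed
  qed
  have S2: "has_vd S (vderiv S f) \<tau> \<and> vderiv S (vderiv S f) \<tau> = L2"
    by (rule vd_intro[OF S2q nt[OF \<tau>S]])
  have covEe: "covD_curve A S x e = Ee"
    unfolding covD_curve_def Ee_def e1_def x1_def by (rule ext) simp
  have vEe: "vderiv S Ee \<tau> = e2 + A (x \<tau>) (x1 \<tau>) (e1 \<tau>)"
    using vd_intro[OF qEe nt[OF \<tau>S]] by blast
  have "covD_curve A S x (covD_curve A S x e) \<tau> = curv A (x \<tau>) (vderiv S x \<tau>) (e \<tau>) (vderiv S x \<tau>)"
    using jac \<tau>S unfolding jacobi_field_def by blast
  also have "\<dots> = 0" unfolding e0 by (rule curv0[OF tvs LC \<Omega> x\<tau>])
  finally have "vderiv S Ee \<tau> + A (x \<tau>) (x1 \<tau>) (Ee \<tau>) = 0"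
    unfolding covEe unfolding covD_curve_def x1_def .
  hence jeq: "e2 + A (x \<tau>) (x1 \<tau>) (e1 \<tau>) = - A (x \<tau>) (x1 \<tau>) (e1 \<tau>)"
    unfolding vEe Ee\<tau> by (simp add: eq_neg_iff_add_eq_0)
  have gneg: "g (x \<tau>) a (- b) = - g (x \<tau>) a b" for a b
    using g_lin2(4)[OF riem x\<tau>, of a "-1" b] by simp
  have L2eq: "L2 = 2 * g (x \<tau>) (Ex \<tau>) (e1 \<tau>)"
    unfolding L2_def jeq Ee\<tau> Ex_def
    by (simp add: g_lin2[OF riem x\<tau>] LC_lin[OF LC x\<tau>] gneg)
  have Ex\<tau>: "Ex \<tau> = covD_curve A I x \<xi> \<tau>"
    unfolding Ex_def covD_curve_def \<xi>1_def x1_def using hx[OF \<tau>S] h\<xi>[OF \<tau>S] by simp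
  show ?thesis
    using S1 S2 L2eq Ex\<tau> unfolding f_def e1_def by auto
qed

lemma second_point:
  fixes I :: "real set"
  assumes I: "is_interval I" and a: "a \<in> I" and b: "b \<in> I" and ab: "a < b" and \<tau>: "\<tau> \<in> I" and e: "e0 > 0"
  shows "\<exists>t'. t' \<in> I \<and> t' \<in> ball \<tau> e0 \<and> t' \<noteq> \<tau>"
proof -
  have I1: "\<forall>a\<in>I. \<forall>b\<in>I. \<forall>x. a \<le> x \<and> x \<le> b \<longrightarrow> x \<in> I" using I is_interval_1 by blast
  show ?thesis
  proof (cases "\<tau> < b")
    case True
    define t' where "t' = min b (\<tau> + e0 / 2)"
    have "\<tau> \<le> t' \<and> t' \<le> b \<longrightarrow> t' \<in> I" using bspec[OF bspec[OF I1 \<tau>] b] by blast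
    hence "t' \<in> I" unfolding t'_def using True e by simp
    moreover have "t' \<in> ball \<tau> e0" unfolding t'_def using True e by (simp add: dist_real_def)
    moreover have "t' \<noteq> \<tau>" unfolding t'_def using True e by simp
    ultimately show ?thesis by blast
  next
    case False
    define t' where "t' = max a (\<tau> - e0 / 2)"
    have "a \<le> t' \<and> t' \<le> \<tau> \<longrightarrow> t' \<in> I" using bspec[OF bspec[OF I1 a] \<tau>] by blast
    hence "t' \<in> I" unfolding t'_def using False ab e by simp
    moreover have "t' \<in> ball \<tau> e0" unfolding t'_def using False ab e by (simp add: dist_real_def)
    moreover have "t' \<noteq> \<tau>" unfolding t'_def using False ab e by simp
    ultimately show ?thesis by blast
  qed
qed

theorem lemma7p2:
  fixes \<Omega> :: "'v::{real_vector,t2_space} set"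
    and g :: "'v \<Rightarrow> 'v \<Rightarrow> 'v \<Rightarrow> real"
    and A :: "'v \<Rightarrow> 'v \<Rightarrow> 'v \<Rightarrow> 'v"
    and I :: "real set" and x \<xi> :: "real \<Rightarrow> 'v" and \<tau> :: real
    and H :: "'i set" and J :: "'i \<Rightarrow> real set" and \<eta> :: "'i \<Rightarrow> real \<Rightarrow> 'v"
  assumes lcs: "lcs_type TYPE('v)"
    and \<Omega>: "open \<Omega>"
    and g: "riem_metric \<Omega> g" "C1_on (\<Omega> \<times> UNIV \<times> UNIV) (\<lambda>(v, a, b). g v a b)"
    and A: "levi_civita \<Omega> g A" "C1_on (\<Omega> \<times> UNIV \<times> UNIV) (\<lambda>(v, a, w). A v a w)"
    and I: "is_interval I" "\<exists>a\<in>I. \<exists>b\<in>I. a < b"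
    and x: "geodesic \<Omega> A I x"
    and \<xi>: "C1_curve I \<xi>"
    and \<tau>: "\<tau> \<in> I"
    and J: "\<And>i. i \<in> H \<Longrightarrow> is_interval (J i) \<and> J i \<subseteq> I \<and> \<tau> \<in> J i \<and> (\<exists>e>0. I \<inter> ball \<tau> e \<subseteq> J i)"
    and jac: "\<And>i. i \<in> H \<Longrightarrow> jacobi_field A x (J i) (\<eta> i) \<and> \<eta> i \<tau> = 0"
    and dense: "closure ((\<lambda>i. vderiv (J i) (\<eta> i) \<tau>) ` H) = UNIV"
  shows "(\<forall>i\<in>H. twice_diff_at (J i) (\<lambda>t. g (x t) (\<xi> t) (\<eta> i t)) \<tau>) \<and>
         (covD_curve A I x \<xi> \<tau> = 0 \<longleftrightarrow>
            (\<forall>i\<in>H. vderiv (J i) (vderiv (J i) (\<lambda>t. g (x t) (\<xi> t) (\<eta> i t))) \<tau> = 0))"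
proof -
  have xC: "C1_curve I x" and xI: "x ` I \<subseteq> \<Omega>" using x unfolding geodesic_def C2_curve_def by blast+
  obtain a b where ab: "a \<in> I" "b \<in> I" "a < b" using I(2) by blast
  have x\<tau>: "x \<tau> \<in> \<Omega>" using xI \<tau> by blast
  have Mi: "(\<forall>t\<in>J i. has_vd (J i) (\<lambda>t. g (x t) (\<xi> t) (\<eta> i t)) t) \<and> has_vd (J i) (vderiv (J i) (\<lambda>t. g (x t) (\<xi> t) (\<eta> i t))) \<tau> \<and>
    vderiv (J i) (vderiv (J i) (\<lambda>t. g (x t) (\<xi> t) (\<eta> i t))) \<tau> = 2 * g (x \<tau>) (covD_curve A I x \<xi> \<tau>) (vderiv (J i) (\<eta> i) \<tau>)"
    if iH: "i \<in> H" for i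
  proof -
    have Ji: "is_interval (J i)" "J i \<subseteq> I" "\<tau> \<in> J i" and "\<exists>e>0. I \<inter> ball \<tau> e \<subseteq> J i" using J[OF iH] by blast+
    then obtain e0 where e0: "e0 > 0" "I \<inter> ball \<tau> e0 \<subseteq> J i" by blast
    obtain t' where t': "t' \<in> I" "t' \<in> ball \<tau> e0" "t' \<noteq> \<tau>" using second_point[OF I(1) ab \<tau> e0(1)] by blast
    have t'J: "t' \<in> J i" using t' e0 by blast
    have nt: "\<And>t. t \<in> J i \<Longrightarrow> at t within J i \<noteq> bot"
      using interval_nontriv[OF Ji(1) Ji(3) t'J] t'(3) by metis
    show ?thesis
      by (rule main_i[OF lcs \<Omega> g(1) g(2) A(1) xC xI \<xi> Ji(2) Ji(3) nt]) (use jac[OF iH] in auto)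
  qed
  have part1: "\<forall>i\<in>H. twice_diff_at (J i) (\<lambda>t. g (x t) (\<xi> t) (\<eta> i t)) \<tau>"
    unfolding twice_diff_at_def using Mi by (meson IntD1 zero_less_one)
  define E where "E = covD_curve A I x \<xi> \<tau>"
  define \<phi> where "\<phi> w = g (x \<tau>) E w" for w
  have cont\<phi>: "isCont \<phi> w" for w
    unfolding isCont_def \<phi>_def
    by (rule contG[OF g(1) g(2) tendsto_const x\<tau> _ tendsto_const tendsto_ident_at]) (use x\<tau> in simp)
  have clZ: "closed (\<phi> -` {0})" by (rule continuous_closed_vimage[OF closed_singleton cont\<phi>])
  have part2: "E = 0 \<longleftrightarrow> (\<forall>i\<in>H. vderiv (J i) (vderiv (J i) (\<lambda>t. g (x t) (\<xi> t) (\<eta> i t))) \<tau> = 0)"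
  proof
    assume "E = 0"
    thus "\<forall>i\<in>H. vderiv (J i) (vderiv (J i) (\<lambda>t. g (x t) (\<xi> t) (\<eta> i t))) \<tau> = 0"
      using Mi unfolding E_def by (simp add: g_lin2[OF g(1) x\<tau>])
  next
    assume h: "\<forall>i\<in>H. vderiv (J i) (vderiv (J i) (\<lambda>t. g (x t) (\<xi> t) (\<eta> i t))) \<tau> = 0"
    have "(\<lambda>i. vderiv (J i) (\<eta> i) \<tau>) ` H \<subseteq> \<phi> -` {0}"
      using h Mi unfolding \<phi>_def E_def by auto
    hence "closure ((\<lambda>i. vderiv (J i) (\<eta> i) \<tau>) ` H) \<subseteq> \<phi> -` {0}" by (rule closure_minimal[OF _ clZ])
    hence "\<phi> E = 0" using dense by auto
    thus "E = 0" using g(1) x\<tau> unfolding \<phi>_def riem_metric_def by force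
  qed
  show ?thesis using part1 part2 unfolding E_def by blast
qed

end
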